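(* Let $\mathcal F\subseteq\mathcal G$ be two prime lattice filters of an MV-algebra $\mathcal L$. Then $$\mathcal F\sqsubseteq\!\!\to\mathcal G=J_u(\mathcal F,\mathcal K(\mathcal G))\sqsubseteq\!\!\to J_d(\mathcal G,\mathcal K(\mathcal F)).$$
   Context: $\mathcal L=(L,\oplus,\lnot,0)$ is an MV-algebra. We write $1=\lnot 0$, $x\otimes y=\lnot(\lnot x\oplus\lnot y)$, and $x\to y=\lnot x\oplus y$, and use the usual lattice order. A lattice filter is a nonempty upward-closed subset closed under $\wedge$. It is prime if it is proper and $a\vee b\in\mathcal F$ implies $a\in\mathcal F$ or $b\in\mathcal F$. For an upward-closed $\mathcal F$ and $a\in L$, let $\mathcal F_a=\{z: z\to a\notin\mathcal F\}$, $\mathcal F^+=\mathcal F_0$, and $\mathcal K(\mathcal F)=\{z : \forall a\notin\mathcal F,\ z\to a\notin\mathcal F\}$ (the kernel; it is an implication filter). An implication filter is a set $P\ni 1$ closed under modus ponens ($x, x\to y\in P\Rightarrow y\in P$). $\eta_P\colon\mathcal L\to\mathcal L/P$ is the canonical epimorphism onto the quotient by the congruence $x\sim_P y\iff x\to y,\ y\to x\in P$, and $X/P=\eta_P[X]$. We set $J_u(\mathcal F,P)=\eta_P^{-1}[\mathcal F/P]$ and $J_d(\mathcal F,P)=\big(J_u(\mathcal F^+,P)\big)^+$. For $\mathcal F\subseteq\mathcal G$ we put $\mathcal F\sqsubseteq\!\!\to\mathcal G=\bigcap_{a\in L\setminus\mathcal G}\mathcal F_a$, and in general $\mathcal F\sqsubseteq\!\!\to\mathcal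 G:=(\mathcal F\cap\mathcal G)\sqsubseteq\!\!\to\mathcal G$. *)

theory Defs
  imports Main
begin

definition mv_algebra :: "('a \<Rightarrow> 'a \<Rightarrow> 'a) \<Rightarrow> ('a \<Rightarrow> 'a) \<Rightarrow> 'a \<Rightarrow> bool" where
  "mv_algebra opl ng z \<longleftrightarrow>
     (\<forall>x y w. opl x (opl y w) = opl (opl x y) w) \<and>
     (\<forall>x y. opl x y = opl y x) \<and>
     (\<forall>x. opl x z = x) \<and>
     (\<forall>x. ng (ng x) = x) \<and>
     (\<forall>x. opl x (ng z) = ng z) \<and>
     (\<forall>x y. opl (ng (opl (ng x) y)) y = opl (ng (opl (ng y) x)) x)"

definition mv_one :: "('a \<Rightarrow> 'a \<Rightarrow> 'a) \<Rightarrow> ('a \<Rightarrow> 'a) \<Rightarrow> 'a \<Rightarrow> 'a" where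
  "mv_one opl ng z = ng z"

definition mv_imp :: "('a \<Rightarrow> 'a \<Rightarrow> 'a) \<Rightarrow> ('a \<Rightarrow> 'a) \<Rightarrow> 'a \<Rightarrow> 'a \<Rightarrow> 'a" where
  "mv_imp opl ng x y = opl (ng x) y"

definition mv_le :: "('a \<Rightarrow> 'a \<Rightarrow> 'a) \<Rightarrow> ('a \<Rightarrow> 'a) \<Rightarrow> 'a \<Rightarrow> 'a \<Rightarrow> 'a \<Rightarrow> bool" where
  "mv_le opl ng z x y \<longleftrightarrow> mv_imp opl ng x y = mv_one opl ng z"

definition mv_sup :: "('a \<Rightarrow> 'a \<Rightarrow> 'a) \<Rightarrow> ('a \<Rightarrow> 'a) \<Rightarrow> 'a \<Rightarrow> 'a \<Rightarrow> 'a" where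
  "mv_sup opl ng x y = opl (ng (opl (ng x) y)) y"

definition mv_inf :: "('a \<Rightarrow> 'a \<Rightarrow> 'a) \<Rightarrow> ('a \<Rightarrow> 'a) \<Rightarrow> 'a \<Rightarrow> 'a \<Rightarrow> 'a" where
  "mv_inf opl ng x y = ng (mv_sup opl ng (ng x) (ng y))"

definition up_closed :: "('a \<Rightarrow> 'a \<Rightarrow> 'a) \<Rightarrow> ('a \<Rightarrow> 'a) \<Rightarrow> 'a \<Rightarrow> 'a set \<Rightarrow> bool" where
  "up_closed opl ng z F \<longleftrightarrow> (\<forall>x y. x \<in> F \<and> mv_le opl ng z x y \<longrightarrow> y \<in> F)"

definition lattice_filter :: "('a \<Rightarrow> 'a \<Rightarrow> 'a) \<Rightarrow> ('a \<Rightarrow> 'a) \<Rightarrow> 'a \<Rightarrow> 'a set \<Rightarrow> bool" where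
  "lattice_filter opl ng z F \<longleftrightarrow> F \<noteq> {} \<and> up_closed opl ng z F \<and>
     (\<forall>x y. x \<in> F \<and> y \<in> F \<longrightarrow> mv_inf opl ng x y \<in> F)"

definition prime_filter :: "('a \<Rightarrow> 'a \<Rightarrow> 'a) \<Rightarrow> ('a \<Rightarrow> 'a) \<Rightarrow> 'a \<Rightarrow> 'a set \<Rightarrow> bool" where
  "prime_filter opl ng z F \<longleftrightarrow> lattice_filter opl ng z F \<and> F \<noteq> UNIV \<and>
     (\<forall>a b. mv_sup opl ng a b \<in> F \<longrightarrow> a \<in> F \<or> b \<in> F)"

definition Fsub :: "('a \<Rightarrow> 'a \<Rightarrow> 'a) \<Rightarrow> ('a \<Rightarrow> 'a) \<Rightarrow> 'a set \<Rightarrow> 'a \<Rightarrow> 'a set" where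
  "Fsub opl ng F a = {w. mv_imp opl ng w a \<notin> F}"

definition Fplus :: "('a \<Rightarrow> 'a \<Rightarrow> 'a) \<Rightarrow> ('a \<Rightarrow> 'a) \<Rightarrow> 'a \<Rightarrow> 'a set \<Rightarrow> 'a set" where
  "Fplus opl ng z F = Fsub opl ng F z"

definition kernel :: "('a \<Rightarrow> 'a \<Rightarrow> 'a) \<Rightarrow> ('a \<Rightarrow> 'a) \<Rightarrow> 'a set \<Rightarrow> 'a set" where
  "kernel opl ng F = {w. \<forall>a. a \<notin> F \<longrightarrow> mv_imp opl ng w a \<notin> F}"

definition imp_equiv :: "('a \<Rightarrow> 'a \<Rightarrow> 'a) \<Rightarrow> ('a \<Rightarrow> 'a) \<Rightarrow> 'a set \<Rightarrow> 'a \<Rightarrow> 'a \<Rightarrow> bool" where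
  "imp_equiv opl ng P x y \<longleftrightarrow> mv_imp opl ng x y \<in> P \<and> mv_imp opl ng y x \<in> P"

definition eta :: "('a \<Rightarrow> 'a \<Rightarrow> 'a) \<Rightarrow> ('a \<Rightarrow> 'a) \<Rightarrow> 'a set \<Rightarrow> 'a \<Rightarrow> 'a set" where
  "eta opl ng P x = {y. imp_equiv opl ng P x y}"

definition J_u :: "('a \<Rightarrow> 'a \<Rightarrow> 'a) \<Rightarrow> ('a \<Rightarrow> 'a) \<Rightarrow> 'a set \<Rightarrow> 'a set \<Rightarrow> 'a set" where
  "J_u opl ng F P = eta opl ng P -` (eta opl ng P ` F)"

definition J_d :: "('a \<Rightarrow> 'a \<Rightarrow> 'a) \<Rightarrow> ('a \<Rightarrow> 'a) \<Rightarrow> 'a \<Rightarrow> 'a set \<Rightarrow> 'a set \<Rightarrow> 'a set" where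
  "J_d opl ng z F P = Fplus opl ng z (J_u opl ng (Fplus opl ng z F) P)"

definition sqimp :: "('a \<Rightarrow> 'a \<Rightarrow> 'a) \<Rightarrow> ('a \<Rightarrow> 'a) \<Rightarrow> 'a set \<Rightarrow> 'a set \<Rightarrow> 'a set" where
  "sqimp opl ng F G = (\<Inter>a\<in>- G. Fsub opl ng (F \<inter> G) a)"

end

theory Submission
  imports Defs
begin

locale mvl = fixes opl :: "'a \<Rightarrow> 'a \<Rightarrow> 'a" and ng :: "'a \<Rightarrow> 'a" and z :: 'a
  assumes mv: "mv_algebra opl ng z"
begin

lemma assoc: "opl x (opl y w) = opl (opl x y) w" using mv unfolding mv_algebra_def by blast
lemma comm: "opl x y = opl y x" using mv unfolding mv_algebra_def by blast
lemma unit: "opl x z = x" using mv unfolding mv_algebra_def by blast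
lemma dn[simp]: "ng (ng x) = x" using mv unfolding mv_algebra_def by blast
lemma top[simp]: "opl x (ng z) = ng z" using mv unfolding mv_algebra_def by blast
lemma ax6: "opl (ng (opl (ng x) y)) y = opl (ng (opl (ng y) x)) x" using mv unfolding mv_algebra_def by blast
lemma lcomm: "opl x (opl y w) = opl y (opl x w)"
  by (simp only: assoc comm[of x y])
lemma unit_l[simp]: "opl z x = x" by (metis unit comm)
lemma unit_r[simp]: "opl x z = x" by (rule unit)
lemma top_l[simp]: "opl (ng z) x = ng z" by (metis top comm)

lemma compl: "opl (ng x) x = ng z"
proof -
  have "opl (ng (opl (ng x) (ng z))) (ng z) = opl (ng (opl (ng (ng z)) x)) x" by (rule ax6)
  thus ?thesis by simp
qed

lemma compl2: "opl x (ng x) = ng z" using compl[of x] comm[of x "ng x"] by simp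

lemma le_ex: "opl (ng x) y = ng z \<Longrightarrow> y = opl x (ng (opl (ng y) x))"
  using ax6[of x y] comm[of "ng (opl (ng y) x)" x] by simp

lemma key: "opl (ng c) M = ng z \<Longrightarrow> opl c N = ng z \<Longrightarrow> opl M N = ng z"
proof -
  assume h1: "opl (ng c) M = ng z" and h2: "opl c N = ng z"
  define k where "k = ng (opl (ng M) c)"
  have "M = opl c k" using le_ex[OF h1] k_def by simp
  hence "opl M N = opl k (opl c N)" by (simp add: assoc comm[of c k])
  thus ?thesis using h2 by simp
qed

end

theorem mainTheorem9:
  fixes opl :: "'a \<Rightarrow> 'a \<Rightarrow> 'a" and ng :: "'a \<Rightarrow> 'a" and z :: 'a
    and F G :: "'a set"
  assumes "mv_algebra opl ng z"
    and "prime_filter opl ng z F" and "prime_filter opl ng z G"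
    and "F \<subseteq> G"
  shows "sqimp opl ng F G =
         sqimp opl ng (J_u opl ng F (kernel opl ng G)) (J_d opl ng z G (kernel opl ng F))"
proof -
  interpret mvl opl ng z by (unfold_locales, rule assms(1))
  note AC = assoc[symmetric] comm lcomm
  have fF: "lattice_filter opl ng z F" and fG: "lattice_filter opl ng z G"
    using assms(2,3) unfolding prime_filter_def by auto
  have upF: "\<And>x y. x \<in> F \<Longrightarrow> opl (ng x) y = ng z \<Longrightarrow> y \<in> F"
    using fF unfolding lattice_filter_def up_closed_def mv_le_def mv_imp_def mv_one_def by blast
  have oneF: "ng z \<in> F"
  proof -
    obtain x where "x \<in> F" using fF unfolding lattice_filter_def by blast
    thus ?thesis using upF[of x "ng z"] by simp
  qed
  have oneK: "\<And>H. ng z \<in> kernel opl ng H" unfolding kernel_def mv_imp_def by simp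
  have Jelim: "\<And>H P x. x \<in> J_u opl ng H P \<Longrightarrow> ng z \<in> P \<Longrightarrow> \<exists>h\<in>H. mv_imp opl ng h x \<in> P"
  proof -
    fix H P x assume a: "x \<in> J_u opl ng H P" and o: "ng z \<in> P"
    then obtain h where h: "h \<in> H" "eta opl ng P x = eta opl ng P h" unfolding J_u_def by auto
    have "x \<in> eta opl ng P x" unfolding eta_def imp_equiv_def mv_imp_def using o compl by simp
    hence "x \<in> eta opl ng P h" using h by simp
    thus "\<exists>h\<in>H. mv_imp opl ng h x \<in> P" using h unfolding eta_def imp_equiv_def by auto
  qed
  have Jintro: "\<And>H P. H \<subseteq> J_u opl ng H P" unfolding J_u_def vimage_def by blast
  define A where "A = J_u opl ng F (kernel opl ng G)"
  define B where "B = J_d opl ng z G (kernel opl ng F)"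
  have Bmem: "\<And>x. x \<in> B \<longleftrightarrow> ng x \<notin> J_u opl ng {w. ng w \<notin> G} (kernel opl ng F)"
    unfolding B_def J_d_def Fplus_def Fsub_def mv_imp_def by simp
  have notB: "\<And>a. a \<notin> B \<Longrightarrow> \<exists>g. ng g \<notin> G \<and> opl (ng g) (ng a) \<in> kernel opl ng F"
  proof -
    fix a assume "a \<notin> B"
    hence "ng a \<in> J_u opl ng {w. ng w \<notin> G} (kernel opl ng F)" using Bmem by blast
    from Jelim[OF this oneK] obtain g where "g \<in> {w. ng w \<notin> G}" "mv_imp opl ng g (ng a) \<in> kernel opl ng F"
      by blast
    thus "\<exists>g. ng g \<notin> G \<and> opl (ng g) (ng a) \<in> kernel opl ng F"
      unfolding mv_imp_def by blast
  qed
  have BG: "B \<subseteq> G"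
  proof
    fix x assume "x \<in> B"
    hence "ng x \<notin> J_u opl ng {w. ng w \<notin> G} (kernel opl ng F)" using Bmem by simp
    hence "\<not> (ng (ng x) \<notin> G)" using Jintro[of "{w. ng w \<notin> G}" "kernel opl ng F"] by blast
    thus "x \<in> G" by simp
  qed
  have FB: "F \<subseteq> B"
  proof
    fix w assume w: "w \<in> F"
    show "w \<in> B"
    proof (rule ccontr)
      assume "w \<notin> B"
      then obtain g where g: "ng g \<notin> G" "opl (ng g) (ng w) \<in> kernel opl ng F"
        using notB by blast
      have "ng g \<notin> F" using g assms(4) by blast
      hence c: "opl (ng (opl (ng g) (ng w))) (ng g) \<notin> F"
        using g(2) unfolding kernel_def mv_imp_def by blast
      have "opl (ng w) (opl (ng (opl (ng g) (ng w))) (ng g)) = ng z"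
        using compl2[of "opl (ng g) (ng w)"] by (simp add: AC)
      thus False using upF[OF w] c by blast
    qed
  qed
  have L: "sqimp opl ng F G = {w. \<forall>a. a \<notin> G \<longrightarrow> opl (ng w) a \<notin> F}"
    unfolding sqimp_def Fsub_def mv_imp_def using assms(4) by (auto simp: Int_absorb2)
  have R: "sqimp opl ng A B = {w. \<forall>a. a \<notin> B \<longrightarrow> opl (ng w) a \<notin> A \<inter> B}"
    unfolding sqimp_def Fsub_def mv_imp_def by auto
  have "{w. \<forall>a. a \<notin> G \<longrightarrow> opl (ng w) a \<notin> F} = {w. \<forall>a. a \<notin> B \<longrightarrow> opl (ng w) a \<notin> A \<inter> B}"
  proof (intro equalityI subsetI CollectI allI impI)
    fix w a assume w: "w \<in> {w. \<forall>a. a \<notin> B \<longrightarrow> opl (ng w) a \<notin> A \<inter> B}" and a: "a \<notin> G"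
    have "a \<notin> B" using a BG by blast
    hence "opl (ng w) a \<notin> A \<inter> B" using w by blast
    moreover have "F \<subseteq> A" unfolding A_def by (rule Jintro)
    ultimately show "opl (ng w) a \<notin> F" using FB by blast
  next
    fix w a assume w: "w \<in> {w. \<forall>a. a \<notin> G \<longrightarrow> opl (ng w) a \<notin> F}" and a: "a \<notin> B"
    show "opl (ng w) a \<notin> A \<inter> B"
    proof
      assume "opl (ng w) a \<in> A \<inter> B"
      hence "opl (ng w) a \<in> J_u opl ng F (kernel opl ng G)" unfolding A_def by blast
      from Jelim[OF this oneK] obtain f where f: "f \<in> F" "opl (ng f) (opl (ng w) a) \<in> kernel opl ng G"
        unfolding mv_imp_def by blast
      define p where "p = opl (ng f) (opl (ng w) a)"
      obtain g where g: "ng g \<notin> G" "opl (ng g) (ng a) \<in> kernel opl ng F"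
        using notB[OF a] by blast
      define q where "q = opl (ng g) (ng a)"
      have "opl (ng p) (ng g) \<notin> G" using f(2) g(1) unfolding p_def kernel_def mv_imp_def by blast
      hence "opl (ng w) (opl (ng p) (ng g)) \<notin> F" using w by blast
      hence c: "opl (ng q) (opl (ng w) (opl (ng p) (ng g))) \<notin> F"
        using g(2) unfolding q_def kernel_def mv_imp_def by blast
      have e1: "opl (ng (ng a)) (opl (opl (ng f) (ng w)) (ng p)) = ng z"
        using compl2[of p] unfolding p_def by (simp add: AC)
      have e2: "opl (ng a) (opl (ng q) (ng g)) = ng z"
        using compl2[of q] unfolding q_def by (simp add: AC)
      have "opl (opl (opl (ng f) (ng w)) (ng p)) (opl (ng q) (ng g)) = ng z"
        by (rule key[OF e1 e2])
      hence "opl (ng f) (opl (ng q) (opl (ng w) (opl (ng p) (ng g)))) = ng z"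
        by (simp add: AC)
      thus False using upF[OF f(1)] c by blast
    qed
  qed
  thus ?thesis using L R A_def B_def by simp
qed

end
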